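(* Let $\delta>0$ be fixed. There is an absolute constant $C>0$ such that the following holds. If $\kappa,\beta,\gamma\to\infty$ with $\frac12\beta\log\beta<\kappa<\frac1\delta\beta\log\beta$ and $\gamma<\beta<\gamma^{2-\delta}$, then, writing $c=\kappa/\beta$, \[f(\beta,\gamma,\kappa)\ge(1-o(1))\Big(1-(c+1)e^{-c}-c^{C}e^{-2c}\Big)^{\beta}.\]
   Context: For positive integers $\beta,\gamma,\kappa$ with $\kappa\le\beta\gamma$, $f(\beta,\gamma,\kappa)$ is the probability that a $\beta\times\gamma$ matrix with entries in $\{0,1\}$, chosen uniformly at random among all such matrices with exactly $\kappa$ entries equal to $1$, has at least two $1$'s in every row. *)

theory Defs
  imports "HOL-Analysis.Analysis" "HOL-Library.FuncSet"
begin

definition zero_one_matrices :: "nat \<Rightarrow> nat \<Rightarrow> (nat \<times> nat \<Rightarrow> nat) set" where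
  "zero_one_matrices \<beta> \<gamma> = ({0..<\<beta>} \<times> {0..<\<gamma>}) \<rightarrow>\<^sub>E {0, 1}"

definition matrices_with_ones :: "nat \<Rightarrow> nat \<Rightarrow> nat \<Rightarrow> (nat \<times> nat \<Rightarrow> nat) set" where
  "matrices_with_ones \<beta> \<gamma> \<kappa> =
     {M \<in> zero_one_matrices \<beta> \<gamma>. card {p \<in> {0..<\<beta>} \<times> {0..<\<gamma>}. M p = 1} = \<kappa>}"

definition good_matrices :: "nat \<Rightarrow> nat \<Rightarrow> nat \<Rightarrow> (nat \<times> nat \<Rightarrow> nat) set" where
  "good_matrices \<beta> \<gamma> \<kappa> =
     {M \<in> matrices_with_ones \<beta> \<gamma> \<kappa>. \<forall>i<\<beta>. card {j \<in> {0..<\<gamma>}. M (i, j) = 1} \<ge> 2}"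

text \<open>Probability under the uniform distribution on matrices with exactly kappa ones.\<close>
definition f :: "nat \<Rightarrow> nat \<Rightarrow> nat \<Rightarrow> real" where
  "f \<beta> \<gamma> \<kappa> = real (card (good_matrices \<beta> \<gamma> \<kappa>)) / real (card (matrices_with_ones \<beta> \<gamma> \<kappa>))"

end

theory Submission
  imports Defs
begin

definition mbox :: "nat \<Rightarrow> nat \<Rightarrow> (nat \<times> nat) set" where
  "mbox \<beta> \<gamma> = {0..<\<beta>} \<times> {0..<\<gamma>}"

definition rowset :: "(nat \<times> nat) set \<Rightarrow> nat \<Rightarrow> nat \<Rightarrow> nat set" where
  "rowset S \<gamma> i = {j \<in> {0..<\<gamma>}. (i, j) \<in> S}"

definition goodS :: "nat \<Rightarrow> nat \<Rightarrow> (nat \<times> nat) set \<Rightarrow> bool" where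
  "goodS \<beta> \<gamma> S \<longleftrightarrow> (\<forall>i<\<beta>. 2 \<le> card (rowset S \<gamma> i))"

definition Aset :: "nat \<Rightarrow> nat \<Rightarrow> nat \<Rightarrow> (nat \<times> nat) set set" where
  "Aset \<beta> \<gamma> k = {S \<in> Pow (mbox \<beta> \<gamma>). card S = k \<and> goodS \<beta> \<gamma> S}"

lemma finite_mbox[simp]: "finite (mbox \<beta> \<gamma>)" by (simp add: mbox_def)
lemma card_mbox[simp]: "card (mbox \<beta> \<gamma>) = \<beta> * \<gamma>" by (simp add: mbox_def card_cartesian_product)

lemma phi_bij: "bij_betw (\<lambda>M. {p \<in> mbox \<beta> \<gamma>. M p = 1}) (zero_one_matrices \<beta> \<gamma>) (Pow (mbox \<beta> \<gamma>))"
proof (rule bij_betw_imageI)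
  show "inj_on (\<lambda>M. {p \<in> mbox \<beta> \<gamma>. M p = 1}) (zero_one_matrices \<beta> \<gamma>)"
  proof (rule inj_onI)
    fix M M' assume M: "M \<in> zero_one_matrices \<beta> \<gamma>" and M': "M' \<in> zero_one_matrices \<beta> \<gamma>"
      and eq: "{p \<in> mbox \<beta> \<gamma>. M p = 1} = {p \<in> mbox \<beta> \<gamma>. M' p = 1}"
    show "M = M'"
    proof
      fix p show "M p = M' p"
      proof (cases "p \<in> mbox \<beta> \<gamma>")
        case True
        then have "M p \<in> {0,1}" "M' p \<in> {0,1}" using M M'
          unfolding zero_one_matrices_def mbox_def by (auto simp only: PiE_iff)
        moreover have "M p = 1 \<longleftrightarrow> M' p = 1" using eq True by blast
        ultimately show ?thesis by auto
      next
        case False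
        then show ?thesis using M M' unfolding zero_one_matrices_def mbox_def by (metis PiE_arb)
      qed
    qed
  qed
  show "(\<lambda>M. {p \<in> mbox \<beta> \<gamma>. M p = 1}) ` zero_one_matrices \<beta> \<gamma> = Pow (mbox \<beta> \<gamma>)"
  proof
    show "(\<lambda>M. {p \<in> mbox \<beta> \<gamma>. M p = 1}) ` zero_one_matrices \<beta> \<gamma> \<subseteq> Pow (mbox \<beta> \<gamma>)" by auto
    show "Pow (mbox \<beta> \<gamma>) \<subseteq> (\<lambda>M. {p \<in> mbox \<beta> \<gamma>. M p = 1}) ` zero_one_matrices \<beta> \<gamma>"
    proof
      fix S assume S: "S \<in> Pow (mbox \<beta> \<gamma>)"
      define M where "M = (\<lambda>p. if p \<in> mbox \<beta> \<gamma> then (if p \<in> S then 1 else 0::nat) else undefined)"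
      have "M \<in> zero_one_matrices \<beta> \<gamma>" unfolding zero_one_matrices_def by (rule PiE_I) (auto simp: M_def mbox_def)
      moreover have "S = {p \<in> mbox \<beta> \<gamma>. M p = 1}" using S by (auto simp: M_def)
      ultimately show "S \<in> (\<lambda>M. {p \<in> mbox \<beta> \<gamma>. M p = 1}) ` zero_one_matrices \<beta> \<gamma>" by blast
    qed
  qed
qed

lemma card_bij_pred:
  assumes "bij_betw h X Y"
  shows "card {x \<in> X. P (h x)} = card {y \<in> Y. P y}"
proof -
  have "h ` {x \<in> X. P (h x)} = {y \<in> Y. P y}" using assms by (auto simp: bij_betw_def)
  moreover have "inj_on h {x \<in> X. P (h x)}" using assms by (auto simp: bij_betw_def inj_on_def)
  ultimately show ?thesis by (metis card_image)
qed

lemma card_good: "card (good_matrices \<beta> \<gamma> k) = card (Aset \<beta> \<gamma> k)"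
proof -
  let ?h = "\<lambda>M. {p \<in> mbox \<beta> \<gamma>. M p = 1}"
  have "good_matrices \<beta> \<gamma> k = {M \<in> zero_one_matrices \<beta> \<gamma>. card (?h M) = k \<and> goodS \<beta> \<gamma> (?h M)}"
    by (auto simp: good_matrices_def matrices_with_ones_def goodS_def rowset_def mbox_def)
  then show ?thesis using card_bij_pred[OF phi_bij, where P="\<lambda>S. card S = k \<and> goodS \<beta> \<gamma> S"]
    by (simp add: Aset_def)
qed

lemma card_mwo: "card (matrices_with_ones \<beta> \<gamma> k) = (\<beta> * \<gamma>) choose k"
proof -
  let ?h = "\<lambda>M. {p \<in> mbox \<beta> \<gamma>. M p = 1}"
  have "matrices_with_ones \<beta> \<gamma> k = {M \<in> zero_one_matrices \<beta> \<gamma>. card (?h M) = k}"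
    by (auto simp: matrices_with_ones_def mbox_def)
  then have "card (matrices_with_ones \<beta> \<gamma> k) = card {S \<in> Pow (mbox \<beta> \<gamma>). card S = k}"
    using card_bij_pred[OF phi_bij, where P="\<lambda>S. card S = k"] by simp
  also have "{S \<in> Pow (mbox \<beta> \<gamma>). card S = k} = {B. B \<subseteq> mbox \<beta> \<gamma> \<and> card B = k}" by auto
  also have "card \<dots> = (\<beta> * \<gamma>) choose k" by (simp add: n_subsets)
  finally show ?thesis .
qed

lemma pow_sum:
  fixes x :: real
  assumes "finite A"
  shows "(\<Sum>R\<in>Pow A. x ^ card R) = (1 + x) ^ card A"
  using assms
proof (induction A rule: finite_induct)
  case empty
  then show ?case by simp
next
  case (insert a A)
  have disj: "Pow A \<inter> insert a ` Pow A = {}" using insert by auto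
  have inj: "inj_on (insert a) (Pow A)" using insert(2) unfolding inj_on_def by (metis PowD in_mono insert_ident)
  have "(\<Sum>R\<in>Pow (insert a A). x ^ card R) = (\<Sum>R\<in>Pow A. x ^ card R) + (\<Sum>R\<in>insert a ` Pow A. x ^ card R)"
    unfolding Pow_insert using insert disj by (intro sum.union_disjoint) auto
  also have "(\<Sum>R\<in>insert a ` Pow A. x ^ card R) = (\<Sum>R\<in>Pow A. x ^ card (insert a R))"
    using inj by (simp add: sum.reindex)
  also have "\<dots> = (\<Sum>R\<in>Pow A. x * x ^ card R)"
  proof (rule sum.cong)
    fix R assume "R \<in> Pow A"
    then have fR: "finite R" and aR: "a \<notin> R" using insert by (auto intro: finite_subset)
    then have "card (insert a R) = Suc (card R)" by (simp add: card_insert_disjoint)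
    then show "x ^ card (insert a R) = x * x ^ card R" by simp
  qed simp
  finally show ?case using insert by (simp add: sum_distrib_left[symmetric] algebra_simps)
qed

lemma row_prod:
  fixes x :: real
  shows "(\<Sum>S\<in>{S \<in> Pow (mbox \<beta> \<gamma>). \<forall>i<\<beta>. Q (rowset S \<gamma> i)}. x ^ card S)
       = (\<Sum>R\<in>{R \<in> Pow {0..<\<gamma>}. Q R}. x ^ card R) ^ \<beta>"
proof -
  define I where "I = {0..<\<beta>}"
  define RQ where "RQ = {R \<in> Pow {0..<\<gamma>}. Q R}"
  have rs: "rowset (Sigma I g) \<gamma> i = g i" if "g \<in> PiE I (\<lambda>_. RQ)" "i \<in> I" for g i
  proof -
    have "g i \<subseteq> {0..<\<gamma>}" using that by (auto simp: RQ_def PiE_iff)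
    then show ?thesis using that(2) unfolding rowset_def by blast
  qed
  have bij: "bij_betw (\<lambda>g. Sigma I g) (PiE I (\<lambda>_. RQ)) {S \<in> Pow (mbox \<beta> \<gamma>). \<forall>i<\<beta>. Q (rowset S \<gamma> i)}"
  proof (rule bij_betw_imageI)
    show "inj_on (\<lambda>g. Sigma I g) (PiE I (\<lambda>_. RQ))"
    proof (rule inj_onI)
      fix g g' assume g: "g \<in> PiE I (\<lambda>_. RQ)" and g': "g' \<in> PiE I (\<lambda>_. RQ)" and eq: "Sigma I g = Sigma I g'"
      show "g = g'"
      proof
        fix i show "g i = g' i"
        proof (cases "i \<in> I")
          case True
          then show ?thesis using rs[OF g True] rs[OF g' True] eq by simp
        next
          case False
          then show ?thesis using g g' by (metis PiE_arb)
        qed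
      qed
    qed
    show "(\<lambda>g. Sigma I g) ` (PiE I (\<lambda>_. RQ)) = {S \<in> Pow (mbox \<beta> \<gamma>). \<forall>i<\<beta>. Q (rowset S \<gamma> i)}"
    proof
      show "(\<lambda>g. Sigma I g) ` (PiE I (\<lambda>_. RQ)) \<subseteq> {S \<in> Pow (mbox \<beta> \<gamma>). \<forall>i<\<beta>. Q (rowset S \<gamma> i)}"
      proof
        fix S assume "S \<in> (\<lambda>g. Sigma I g) ` (PiE I (\<lambda>_. RQ))"
        then obtain g where g: "g \<in> PiE I (\<lambda>_. RQ)" and S: "S = Sigma I g" by blast
        have "S \<subseteq> mbox \<beta> \<gamma>" using g unfolding S mbox_def I_def RQ_def by (auto simp: PiE_iff)
        moreover have "Q (rowset S \<gamma> i)" if "i < \<beta>" for i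
        proof -
          have "i \<in> I" using that by (simp add: I_def)
          then show ?thesis using rs[OF g] g unfolding S by (auto simp: PiE_iff RQ_def)
        qed
        ultimately show "S \<in> {S \<in> Pow (mbox \<beta> \<gamma>). \<forall>i<\<beta>. Q (rowset S \<gamma> i)}" by auto
      qed
      show "{S \<in> Pow (mbox \<beta> \<gamma>). \<forall>i<\<beta>. Q (rowset S \<gamma> i)} \<subseteq> (\<lambda>g. Sigma I g) ` (PiE I (\<lambda>_. RQ))"
      proof
        fix S assume S: "S \<in> {S \<in> Pow (mbox \<beta> \<gamma>). \<forall>i<\<beta>. Q (rowset S \<gamma> i)}"
        define g where "g = restrict (rowset S \<gamma>) I"
        have "g \<in> PiE I (\<lambda>_. RQ)" using S by (auto simp: g_def RQ_def I_def rowset_def)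
        moreover have "S = Sigma I g" using S by (auto simp: g_def I_def rowset_def mbox_def)
        ultimately show "S \<in> (\<lambda>g. Sigma I g) ` (PiE I (\<lambda>_. RQ))" by blast
      qed
    qed
  qed
  have fin: "finite RQ" by (simp add: RQ_def)
  have "(\<Sum>S\<in>{S \<in> Pow (mbox \<beta> \<gamma>). \<forall>i<\<beta>. Q (rowset S \<gamma> i)}. x ^ card S)
      = (\<Sum>g\<in>PiE I (\<lambda>_. RQ). x ^ card (Sigma I g))"
    using sum.reindex_bij_betw[OF bij, of "\<lambda>S. x ^ card S"] by simp
  also have "\<dots> = (\<Sum>g\<in>PiE I (\<lambda>_. RQ). \<Prod>i\<in>I. x ^ card (g i))"
  proof (rule sum.cong)
    fix g assume g: "g \<in> PiE I (\<lambda>_. RQ)"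
    have "\<forall>i\<in>I. finite (g i)" using g by (auto simp: PiE_iff RQ_def intro: finite_subset)
    then have "card (Sigma I g) = (\<Sum>i\<in>I. card (g i))" by (simp add: I_def)
    then show "x ^ card (Sigma I g) = (\<Prod>i\<in>I. x ^ card (g i))" by (simp add: power_sum)
  qed simp
  also have "\<dots> = (\<Prod>i\<in>I. \<Sum>R\<in>RQ. x ^ card R)"
    using prod_sum_PiE[of I "\<lambda>_. RQ" "\<lambda>_ R. x ^ card R"] fin by (simp add: I_def)
  also have "\<dots> = (\<Sum>R\<in>RQ. x ^ card R) ^ \<beta>" by (simp add: I_def)
  finally show ?thesis by (simp add: RQ_def)
qed

lemma row_all:
  fixes x :: real
  shows "(\<Sum>S\<in>Pow (mbox \<beta> \<gamma>). x ^ card S) = ((1 + x) ^ \<gamma>) ^ \<beta>"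
proof -
  have e1: "{S \<in> Pow (mbox \<beta> \<gamma>). \<forall>i<\<beta>. True} = Pow (mbox \<beta> \<gamma>)" by blast
  have e2: "{R \<in> Pow {0..<\<gamma>}. True} = Pow {0..<\<gamma>}" by blast
  have "(\<Sum>S\<in>{S \<in> Pow (mbox \<beta> \<gamma>). \<forall>i<\<beta>. True}. x ^ card S) = (\<Sum>R\<in>{R \<in> Pow {0..<\<gamma>}. True}. x ^ card R) ^ \<beta>"
    by (rule row_prod)
  then show ?thesis unfolding e1 e2 pow_sum[OF finite_atLeastLessThan] by simp
qed

lemma row_good:
  fixes x :: real
  shows "(\<Sum>R\<in>{R \<in> Pow {0..<\<gamma>}. 2 \<le> card R}. x ^ card R) = (1 + x) ^ \<gamma> - 1 - real \<gamma> * x"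
proof -
  let ?J = "{0..<\<gamma>}"
  have split: "Pow ?J = {R \<in> Pow ?J. 2 \<le> card R} \<union> insert {} ((\<lambda>j. {j}) ` ?J)"
  proof -
    have *: "R \<in> insert {} ((\<lambda>j. {j}) ` ?J)" if "R \<in> Pow ?J" "card R < 2" for R
    proof -
      have fR: "finite R" using that finite_subset by auto
      have "card R = 0 \<or> card R = 1" using that by auto
      then show ?thesis using fR that by (auto simp: card_1_singleton_iff)
    qed
    show ?thesis
    proof (rule equalityI)
      show "Pow ?J \<subseteq> {R \<in> Pow ?J. 2 \<le> card R} \<union> insert {} ((\<lambda>j. {j}) ` ?J)"
      proof
        fix R assume R: "R \<in> Pow ?J"
        show "R \<in> {R \<in> Pow ?J. 2 \<le> card R} \<union> insert {} ((\<lambda>j. {j}) ` ?J)"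
        proof (cases "card R < 2")
          case True then show ?thesis using R * by blast
        next
          case False then show ?thesis using R by simp
        qed
      qed
      show "{R \<in> Pow ?J. 2 \<le> card R} \<union> insert {} ((\<lambda>j. {j}) ` ?J) \<subseteq> Pow ?J" by auto
    qed
  qed
  have disj: "{R \<in> Pow ?J. 2 \<le> card R} \<inter> insert {} ((\<lambda>j. {j}) ` ?J) = {}" by auto
  have "(1 + x) ^ \<gamma> = (\<Sum>R\<in>Pow ?J. x ^ card R)" using pow_sum[of ?J x] by simp
  also have "\<dots> = (\<Sum>R\<in>{R \<in> Pow ?J. 2 \<le> card R}. x ^ card R) + (\<Sum>R\<in>insert {} ((\<lambda>j. {j}) ` ?J). x ^ card R)"
    by (subst split, rule sum.union_disjoint) (use disj in auto)
  also have "(\<Sum>R\<in>insert {} ((\<lambda>j. {j}) ` ?J). x ^ card R) = 1 + (\<Sum>R\<in>(\<lambda>j. {j}) ` ?J. x ^ card R)"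
    by (subst sum.insert) auto
  also have "(\<Sum>R\<in>(\<lambda>j. {j}) ` ?J. x ^ card R) = real \<gamma> * x"
    by (subst sum.reindex) (auto simp: inj_on_def)
  finally show ?thesis by simp
qed

lemma good_sum:
  fixes x :: real
  shows "(\<Sum>S\<in>{S \<in> Pow (mbox \<beta> \<gamma>). goodS \<beta> \<gamma> S}. x ^ card S) = ((1 + x) ^ \<gamma> - 1 - real \<gamma> * x) ^ \<beta>"
  using row_prod[where Q="\<lambda>R. 2 \<le> card R" and \<beta>=\<beta> and \<gamma>=\<gamma> and x=x] row_good[where \<gamma>=\<gamma> and x=x] by (simp add: goodS_def)

lemma goodS_insert:
  assumes "goodS \<beta> \<gamma> S" shows "goodS \<beta> \<gamma> (insert p S)"
  unfolding goodS_def
proof (intro allI impI)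
  fix i assume "i < \<beta>"
  then have "2 \<le> card (rowset S \<gamma> i)" using assms by (simp add: goodS_def)
  moreover have "card (rowset S \<gamma> i) \<le> card (rowset (insert p S) \<gamma> i)"
    by (rule card_mono) (auto simp: rowset_def)
  ultimately show "2 \<le> card (rowset (insert p S) \<gamma> i)" by simp
qed

lemma Aset_step:
  "card (Aset \<beta> \<gamma> k) * (\<beta> * \<gamma> - k) \<le> card (Aset \<beta> \<gamma> (Suc k)) * Suc k"
proof -
  define P where "P = Sigma (Aset \<beta> \<gamma> k) (\<lambda>S. mbox \<beta> \<gamma> - S)"
  define Q where "Q = Sigma (Aset \<beta> \<gamma> (Suc k)) (\<lambda>T. T)"
  have finA: "finite (Aset \<beta> \<gamma> j)" for j by (simp add: Aset_def)
  have "card P = (\<Sum>S\<in>Aset \<beta> \<gamma> k. card (mbox \<beta> \<gamma> - S))"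
    unfolding P_def using finA by (intro card_SigmaI) auto
  also have "\<dots> = (\<Sum>S\<in>Aset \<beta> \<gamma> k. \<beta> * \<gamma> - k)"
  proof (rule sum.cong)
    fix S assume "S \<in> Aset \<beta> \<gamma> k"
    then have "S \<subseteq> mbox \<beta> \<gamma>" "card S = k" by (auto simp: Aset_def)
    then show "card (mbox \<beta> \<gamma> - S) = \<beta> * \<gamma> - k" by (simp add: card_Diff_subset finite_subset)
  qed simp
  finally have cP: "card P = card (Aset \<beta> \<gamma> k) * (\<beta> * \<gamma> - k)" by simp
  have "card Q = (\<Sum>T\<in>Aset \<beta> \<gamma> (Suc k). card T)"
    unfolding Q_def using finA by (intro card_SigmaI) (auto simp: Aset_def intro: finite_subset)
  also have "\<dots> = (\<Sum>T\<in>Aset \<beta> \<gamma> (Suc k). Suc k)" by (rule sum.cong) (auto simp: Aset_def)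
  finally have cQ: "card Q = card (Aset \<beta> \<gamma> (Suc k)) * Suc k" by simp
  have finQ: "finite Q" unfolding Q_def using finA by (intro finite_SigmaI) (auto simp: Aset_def intro: finite_subset)
  have inj: "inj_on (\<lambda>(S, p). (insert p S, p)) P"
  proof (rule inj_onI)
    fix u v assume u: "u \<in> P" and v: "v \<in> P" and eq: "(\<lambda>(S, p). (insert p S, p)) u = (\<lambda>(S, p). (insert p S, p)) v"
    obtain S p where u': "u = (S, p)" by (cases u) blast
    obtain S' p' where v': "v = (S', p')" by (cases v) blast
    have "p \<notin> S" "p' \<notin> S'" using u v u' v' by (auto simp: P_def)
    moreover have "insert p S = insert p' S'" "p = p'" using eq u' v' by auto
    ultimately show "u = v" using u' v' by (metis insert_ident)
  qed
  have img: "(\<lambda>(S, p). (insert p S, p)) ` P \<subseteq> Q"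
  proof clarify
    fix S p assume "(S, p) \<in> P"
    then have S: "S \<in> Aset \<beta> \<gamma> k" and p: "p \<in> mbox \<beta> \<gamma>" "p \<notin> S" by (auto simp: P_def)
    have fS: "finite S" using S by (auto simp: Aset_def intro: finite_subset)
    have "insert p S \<in> Aset \<beta> \<gamma> (Suc k)"
      using S p fS goodS_insert by (auto simp: Aset_def)
    then show "(insert p S, p) \<in> Q" by (simp add: Q_def)
  qed
  have "card P \<le> card Q" using card_inj_on_le[OF inj img finQ] .
  then show ?thesis using cP cQ by simp
qed

lemma binom_step: "(n choose Suc m) * Suc m = (n - m) * (n choose m)"
proof -
  have 1: "Suc m * (n choose Suc m) = n * ((n - 1) choose m)" using times_binomial_minus1_eq[of "Suc m" n] by simp
  have 2: "(n - m) * (n choose m) = n * ((n - 1) choose m)" by (rule binomial_absorb_comp)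
  show ?thesis using 1 2 by (metis mult.commute)
qed

lemma Aset_mono:
  assumes "k \<le> m" "m \<le> \<beta> * \<gamma>"
  shows "card (Aset \<beta> \<gamma> k) * ((\<beta> * \<gamma>) choose m) \<le> card (Aset \<beta> \<gamma> m) * ((\<beta> * \<gamma>) choose k)"
  using assms
proof (induction m rule: dec_induct)
  case base
  then show ?case by simp
next
  case (step m)
  let ?N = "\<beta> * \<gamma>"
  let ?a = "\<lambda>j. card (Aset \<beta> \<gamma> j)"
  have IH: "?a k * (?N choose m) \<le> ?a m * (?N choose k)" using step by simp
  have "?a k * (?N choose Suc m) * Suc m = ?a k * ((?N choose Suc m) * Suc m)" by (simp only: mult.assoc)
  also have "\<dots> = ?a k * ((?N - m) * (?N choose m))" by (simp only: binom_step)
  also have "\<dots> = ?a k * (?N choose m) * (?N - m)" by (simp add: algebra_simps)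
  also have "\<dots> \<le> ?a m * (?N choose k) * (?N - m)" using IH by (intro mult_right_mono) auto
  also have "\<dots> = (?a m * (?N - m)) * (?N choose k)" by (simp add: mult_ac)
  also have "\<dots> \<le> (?a (Suc m) * Suc m) * (?N choose k)" using Aset_step[of \<beta> \<gamma> m] by (intro mult_right_mono) auto
  finally have "(?a k * (?N choose Suc m)) * Suc m \<le> (?a (Suc m) * (?N choose k)) * Suc m" by (simp add: algebra_simps)
  then show ?case using mult_le_cancel2[of "?a k * (?N choose Suc m)" "Suc m" "?a (Suc m) * (?N choose k)"] by linarith
qed

lemma main_comb:
  fixes x y :: real
  assumes kN: "\<kappa> \<le> \<beta> * \<gamma>" and x: "0 < x" and xy: "x \<le> y"
  shows "((1 + x) ^ \<gamma> - 1 - real \<gamma> * x) ^ \<beta> - (x / y) ^ \<kappa> * ((1 + y) ^ \<gamma> - 1 - real \<gamma> * y) ^ \<beta>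
         \<le> f \<beta> \<gamma> \<kappa> * ((1 + x) ^ \<gamma>) ^ \<beta>"
proof -
  let ?N = "\<beta> * \<gamma>"
  let ?a = "\<lambda>j. card (Aset \<beta> \<gamma> j)"
  define GS where "GS = {S \<in> Pow (mbox \<beta> \<gamma>). goodS \<beta> \<gamma> S}"
  define GS1 where "GS1 = {S \<in> GS. card S \<le> \<kappa>}"
  define GS2 where "GS2 = {S \<in> GS. \<not> card S \<le> \<kappa>}"
  have finGS: "finite GS" by (simp add: GS_def)
  have y: "0 < y" using x xy by simp
  have Cpos: "0 < real (?N choose \<kappa>)" using kN by simp
  have fdef: "f \<beta> \<gamma> \<kappa> = real (?a \<kappa>) / real (?N choose \<kappa>)"
    by (simp add: f_def card_good card_mwo)
  have f0: "0 \<le> f \<beta> \<gamma> \<kappa>" by (simp add: fdef)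
  have split: "(\<Sum>S\<in>GS. x ^ card S) = (\<Sum>S\<in>GS1. x ^ card S) + (\<Sum>S\<in>GS2. x ^ card S)"
  proof -
    have e: "GS = GS1 \<union> GS2" by (auto simp: GS1_def GS2_def)
    have d: "GS1 \<inter> GS2 = {}" by (auto simp: GS1_def GS2_def)
    have fin12: "finite GS1" "finite GS2" using finGS by (auto simp: GS1_def GS2_def)
    show ?thesis by (subst e) (rule sum.union_disjoint[OF fin12 d])
  qed
  have part2: "(\<Sum>S\<in>GS2. x ^ card S) \<le> (x / y) ^ \<kappa> * (\<Sum>S\<in>GS. y ^ card S)"
  proof -
    have "(\<Sum>S\<in>GS2. x ^ card S) \<le> (\<Sum>S\<in>GS2. (x / y) ^ \<kappa> * y ^ card S)"
    proof (rule sum_mono)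
      fix S assume "S \<in> GS2"
      then have n: "\<kappa> \<le> card S" by (simp add: GS2_def)
      have "x ^ card S = x ^ \<kappa> * x ^ (card S - \<kappa>)" using n by (simp add: power_add[symmetric])
      also have "\<dots> \<le> x ^ \<kappa> * y ^ (card S - \<kappa>)" using x xy by (intro mult_left_mono power_mono) auto
      also have "\<dots> = (x / y) ^ \<kappa> * (y ^ \<kappa> * y ^ (card S - \<kappa>))" using y by (simp add: power_divide)
      also have "\<dots> = (x / y) ^ \<kappa> * y ^ card S" using n by (simp add: power_add[symmetric])
      finally show "x ^ card S \<le> (x / y) ^ \<kappa> * y ^ card S" .
    qed
    also have "\<dots> = (x / y) ^ \<kappa> * (\<Sum>S\<in>GS2. y ^ card S)" by (simp add: sum_distrib_left)
    also have "\<dots> \<le> (x / y) ^ \<kappa> * (\<Sum>S\<in>GS. y ^ card S)"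
      using x y finGS by (intro mult_left_mono sum_mono2) (auto simp: GS2_def)
    finally show ?thesis .
  qed
  have part1: "(\<Sum>S\<in>GS1. x ^ card S) \<le> f \<beta> \<gamma> \<kappa> * ((1 + x) ^ \<gamma>) ^ \<beta>"
  proof -
    have fin1: "finite GS1" using finGS by (simp add: GS1_def)
    have "(\<Sum>S\<in>GS1. x ^ card S) = (\<Sum>k\<in>{..\<kappa>}. \<Sum>S\<in>{S \<in> GS1. card S = k}. x ^ card S)"
      by (rule sum.group[OF fin1 finite_atMost, of card, symmetric]) (auto simp: GS1_def)
    also have "\<dots> = (\<Sum>k\<in>{..\<kappa>}. real (?a k) * x ^ k)"
    proof (rule sum.cong)
      fix k assume "k \<in> {..\<kappa>}"
      then have "{S \<in> GS1. card S = k} = Aset \<beta> \<gamma> k" by (auto simp: GS1_def GS_def Aset_def)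
      moreover have "(\<Sum>S\<in>Aset \<beta> \<gamma> k. x ^ card S) = (\<Sum>S\<in>Aset \<beta> \<gamma> k. x ^ k)"
        by (rule sum.cong) (auto simp: Aset_def)
      ultimately show "(\<Sum>S\<in>{S \<in> GS1. card S = k}. x ^ card S) = real (?a k) * x ^ k" by simp
    qed simp
    also have "\<dots> \<le> (\<Sum>k\<in>{..\<kappa>}. f \<beta> \<gamma> \<kappa> * (real (?N choose k) * x ^ k))"
    proof (rule sum_mono)
      fix k assume "k \<in> {..\<kappa>}"
      then have "?a k * (?N choose \<kappa>) \<le> ?a \<kappa> * (?N choose k)" using Aset_mono[of k \<kappa> \<beta> \<gamma>] kN by simp
      then have "real (?a k) * real (?N choose \<kappa>) \<le> real (?a \<kappa>) * real (?N choose k)"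
        by (metis of_nat_le_iff of_nat_mult)
      then have "real (?a k) \<le> f \<beta> \<gamma> \<kappa> * real (?N choose k)"
        using Cpos by (simp add: fdef field_simps)
      then show "real (?a k) * x ^ k \<le> f \<beta> \<gamma> \<kappa> * (real (?N choose k) * x ^ k)"
        using x by (simp add: mult_right_mono mult.assoc[symmetric])
    qed
    also have "\<dots> = f \<beta> \<gamma> \<kappa> * (\<Sum>k\<in>{..\<kappa>}. real (?N choose k) * x ^ k)" by (simp add: sum_distrib_left)
    also have "\<dots> \<le> f \<beta> \<gamma> \<kappa> * (\<Sum>k\<in>{..?N}. real (?N choose k) * x ^ k)"
      using f0 x kN by (intro mult_left_mono sum_mono2) auto
    also have "(\<Sum>k\<in>{..?N}. real (?N choose k) * x ^ k) = (x + 1) ^ ?N"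
      using binomial_ring[of x 1 ?N] by simp
    also have "(x + 1) ^ ?N = ((1 + x) ^ \<gamma>) ^ \<beta>" by (simp add: power_mult[symmetric] mult.commute add.commute)
    finally show ?thesis .
  qed
  have "((1 + x) ^ \<gamma> - 1 - real \<gamma> * x) ^ \<beta> = (\<Sum>S\<in>GS. x ^ card S)"
    using good_sum[of x \<beta> \<gamma>] by (simp add: GS_def)
  moreover have "((1 + y) ^ \<gamma> - 1 - real \<gamma> * y) ^ \<beta> = (\<Sum>S\<in>GS. y ^ card S)"
    using good_sum[of y \<beta> \<gamma>] by (simp add: GS_def)
  ultimately show ?thesis using split part1 part2 by simp
qed


lemma pow_lower:
  fixes t :: real
  assumes "0 \<le> t" "t \<le> 1"
  shows "exp (real n * (t - t\<^sup>2)) \<le> (1 + t) ^ n"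
proof -
  have "t - t\<^sup>2 \<le> ln (1 + t)" using ln_one_plus_pos_lower_bound assms by simp
  then have "exp (real n * (t - t\<^sup>2)) \<le> exp (real n * ln (1 + t))" by (intro exp_le_cancel_iff[THEN iffD2] mult_left_mono) auto
  also have "\<dots> = exp (ln (1 + t)) ^ n" by (simp add: exp_of_nat_mult)
  also have "\<dots> = (1 + t) ^ n" using assms by simp
  finally show ?thesis .
qed

lemma h_deriv:
  fixes z :: real and m :: nat
  assumes "0 < z"
  shows "((\<lambda>w. (1 + real (Suc m) * w) / (1 + w) ^ Suc m) has_real_derivative
          (- (real (Suc m) * real m * z / (1 + z) ^ (Suc m + 1)))) (at z)"
proof -
  have z1: "0 < 1 + z" using assms by simp
  have d1: "((\<lambda>w. 1 + real (Suc m) * w) has_real_derivative real (Suc m)) (at z)"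
    by (auto intro!: derivative_eq_intros)
  have d0: "((\<lambda>w. 1 + w) has_real_derivative 1) (at z)" by (auto intro!: derivative_eq_intros)
  have d2: "((\<lambda>w. (1 + w) ^ Suc m) has_real_derivative (1 + of_nat m) * (1 * (1 + z) ^ m)) (at z)"
    by (rule DERIV_power_Suc[OF d0])
  have nz: "(1 + z) ^ Suc m \<noteq> 0" using z1 by simp
  have D: "((\<lambda>w. (1 + real (Suc m) * w) / (1 + w) ^ Suc m) has_real_derivative
        ((real (Suc m)) * (1 + z) ^ Suc m - (1 + real (Suc m) * z) * ((1 + of_nat m) * (1 * (1 + z) ^ m))) / ((1 + z) ^ Suc m * (1 + z) ^ Suc m)) (at z)"
    by (rule DERIV_divide[OF d1 d2 nz])
  have p: "(1 + z) ^ m > 0" using z1 by simp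
  have num: "(real (Suc m)) * (1 + z) ^ Suc m - (1 + real (Suc m) * z) * ((1 + of_nat m) * (1 * (1 + z) ^ m))
        = - (real (Suc m) * real m * z) * (1 + z) ^ m" by (simp add: algebra_simps)
  have den: "(1 + z) ^ Suc m * (1 + z) ^ Suc m = (1 + z) ^ (Suc m + 1) * (1 + z) ^ m" by (simp add: algebra_simps)
  have "((real (Suc m)) * (1 + z) ^ Suc m - (1 + real (Suc m) * z) * ((1 + of_nat m) * (1 * (1 + z) ^ m))) / ((1 + z) ^ Suc m * (1 + z) ^ Suc m)
     = - (real (Suc m) * real m * z / (1 + z) ^ (Suc m + 1))"
    unfolding num den using p z1 by (subst nonzero_mult_divide_mult_cancel_right) auto
  then show ?thesis using D by simp
qed

lemma h_diff:
  fixes x y :: real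
  assumes g: "1 \<le> \<gamma>" and x: "0 < x" and xy: "x < y"
  shows "(1 + real \<gamma> * x) / (1 + x) ^ \<gamma> - (1 + real \<gamma> * y) / (1 + y) ^ \<gamma> \<le> (y - x) * (real \<gamma>)\<^sup>2 * y / (1 + x) ^ \<gamma>"
proof -
  obtain m where m: "\<gamma> = Suc m" using g by (cases \<gamma>) auto
  define h where "h = (\<lambda>w::real. (1 + real (Suc m) * w) / (1 + w) ^ Suc m)"
  define h' where "h' = (\<lambda>z::real. - (real (Suc m) * real m * z / (1 + z) ^ (Suc m + 1)))"
  have "\<exists>z. x < z \<and> z < y \<and> h y - h x = (y - x) * h' z"
    using xy by (intro MVT2) (use x h_deriv in \<open>auto simp: h_def h'_def\<close>)
  then obtain z where z: "x < z" "z < y" and eq: "h y - h x = (y - x) * h' z" by blast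
  have "h x - h y = (y - x) * (real (Suc m) * real m * z / (1 + z) ^ (Suc m + 1))"
    using eq by (simp add: h'_def)
  also have "\<dots> \<le> (y - x) * ((real (Suc m))\<^sup>2 * y / (1 + x) ^ Suc m)"
  proof (rule mult_left_mono)
    have "real (Suc m) * real m * z \<le> (real (Suc m))\<^sup>2 * y"
      using z x by (intro mult_mono) (auto simp: power2_eq_square)
    moreover have "(1 + x) ^ Suc m \<le> (1 + z) ^ (Suc m + 1)"
    proof -
      have "(1 + x) ^ Suc m \<le> (1 + z) ^ Suc m" using x z by (intro power_mono) auto
      also have "\<dots> \<le> (1 + z) ^ (Suc m + 1)" using x z by (intro power_increasing) auto
      finally show ?thesis .
    qed
    ultimately show "real (Suc m) * real m * z / (1 + z) ^ (Suc m + 1) \<le> (real (Suc m))\<^sup>2 * y / (1 + x) ^ Suc m"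
      using x z by (intro frac_le) auto
  qed (use xy in auto)
  finally show ?thesis by (simp add: h_def m)
qed


lemma pow_compare:
  fixes u v w e :: real
  assumes u: "0 \<le> u" and v: "0 \<le> v" and w: "0 \<le> w" and base: "1/2 \<le> 1 - u - v"
    and w2: "w \<le> 1/2" and e: "0 < e" and B: "real n * (w - v) \<le> e / 4"
  shows "(1 - e / 2) * (1 - u - v) ^ n \<le> (1 - u - w) ^ n"
proof (cases "w \<le> v")
  case True
  have "(1 - u - v) ^ n \<le> (1 - u - w) ^ n" using True base by (intro power_mono) auto
  moreover have "0 \<le> (1 - u - v) ^ n" using base by simp
  moreover have "(1 - e / 2) * (1 - u - v) ^ n \<le> 1 * (1 - u - v) ^ n"
    using e \<open>0 \<le> (1 - u - v) ^ n\<close> by (intro mult_right_mono) auto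
  ultimately show ?thesis by simp
next
  case False
  define t where "t = 2 * (w - v)"
  have t0: "0 \<le> t" and t1: "t \<le> 1" using False w2 v by (auto simp: t_def)
  have "(1 - u - v) * (1 - t) \<le> 1 - u - w"
  proof -
    have "(1 - u - v) * (1 - t) = (1 - u - v) - (1 - u - v) * t" by (simp add: algebra_simps)
    moreover have "(1 - u - v) * t \<ge> (1/2) * t" using base t0 by (intro mult_right_mono) auto
    ultimately show ?thesis by (simp add: t_def)
  qed
  have b0: "0 \<le> 1 - u - v" using base by simp
  have bern: "1 - real n * t \<le> (1 - t) ^ n"
    using Bernoulli_inequality[of "- t" n] t1 by simp
  have nt: "real n * t \<le> e / 2" using B by (simp add: t_def algebra_simps)
  have "(1 - e / 2) * (1 - u - v) ^ n \<le> (1 - real n * t) * (1 - u - v) ^ n"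
    using nt b0 by (intro mult_right_mono) auto
  also have "\<dots> \<le> (1 - t) ^ n * (1 - u - v) ^ n" using bern b0 by (intro mult_right_mono) auto
  also have "\<dots> = ((1 - u - v) * (1 - t)) ^ n" by (simp add: power_mult_distrib mult.commute)
  also have "\<dots> \<le> (1 - u - w) ^ n"
    using \<open>(1 - u - v) * (1 - t) \<le> 1 - u - w\<close> b0 t1 by (intro power_mono) auto
  finally show ?thesis .
qed

lemma core:
  fixes \<beta> \<gamma> \<kappa> :: nat and \<epsilon> K c :: real
  assumes \<gamma>1: "1 \<le> \<gamma>" and \<beta>1: "1 \<le> \<beta>"
    and cdef: "c = real \<kappa> / real \<beta>"
    and \<epsilon>0: "0 < \<epsilon>" and \<epsilon>1: "\<epsilon> < 1" and Kdef: "K = ln (2 / \<epsilon>)"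
    and C1: "1 \<le> c" and C2: "96 * c^2 \<le> exp c" and C3: "6 * (1 + c) \<le> exp c" and C4: "4 * c^4 \<le> exp (2 * c)"
    and C5: "72 * (1 + c) \<le> c^2" and C6: "192 * (1 + c)^2 * K \<le> \<epsilon> * c^3"
    and D1: "4 * c * K / real \<beta> \<le> 1/64" and D2: "c^2 / real \<gamma> \<le> 1/4"
    and D3: "2 * real \<beta> * (1 + c) * c^2 * exp (- c) / real \<gamma> \<le> \<epsilon> / 8"
  shows "(1 - \<epsilon>) * (1 - (c + 1) * exp (- c) - c^4 * exp (- 2 * c)) ^ \<beta> \<le> f \<beta> \<gamma> \<kappa>"
proof -
  define b where "b = real \<beta>"
  define g where "g = real \<gamma>"
  have b1: "1 \<le> b" and g1: "1 \<le> g" using \<beta>1 \<gamma>1 by (auto simp: b_def g_def)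
  have kap: "real \<kappa> = b * c" using cdef b1 by (simp add: b_def)
  have K0: "0 < K" using \<epsilon>0 \<epsilon>1 by (simp add: Kdef)
  have ecpos: "0 < exp (- c)" by simp
  have eec: "exp c * exp (- c) = 1" by (simp add: exp_minus)
  define E1 where "E1 = exp (- c)"
  have e2c: "exp (- 2 * c) = E1^2" by (simp add: E1_def power2_eq_square exp_add[symmetric])
  define d1 where "d1 = 12 * c^2 * E1"
  define d0 where "d0 = sqrt (4 * c * K / b)"
  define a where "a = c - (d1 + d0)"
  define x where "x = a / g"
  define s where "s = d0 / (2 * c)"
  define y where "y = x * (1 + s)"
  have E1pos: "0 < E1" by (simp add: E1_def)
  have d1pos: "0 \<le> d1" using E1pos by (simp add: d1_def)
  have d1le: "d1 \<le> 1/8"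
  proof -
    have "96 * c^2 * E1 \<le> exp c * E1" using C2 E1pos by (intro mult_right_mono) auto
    then show ?thesis using eec by (simp add: d1_def E1_def)
  qed
  have arg0: "0 < 4 * c * K / b" using C1 K0 b1 by simp
  have d0pos: "0 < d0" using arg0 by (simp add: d0_def)
  have d0sq: "d0^2 = 4 * c * K / b" using arg0 by (simp add: d0_def)
  have d0le: "d0 \<le> 1/8"
  proof (rule power2_le_imp_le)
    show "d0^2 \<le> (1/8)^2" using d0sq D1 by (simp add: b_def power2_eq_square)
  qed simp
  have a_ge: "c - 1/4 \<le> a" using d1le d0le by (simp add: a_def)
  have a_le: "a \<le> c" using d1pos d0pos by (simp add: a_def)
  have apos: "0 < a" using a_ge C1 by simp
  have cc: "c \<le> c^2" using C1 by (simp add: power2_eq_square)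
  have c2g: "c^2 \<le> g / 4" using D2 g1 by (simp add: g_def field_simps)
  have cg: "c \<le> g / 4" using cc c2g by simp
  have xpos: "0 < x" using apos g1 by (simp add: x_def)
  have xle: "x \<le> 1/4" using a_le cg g1 by (simp add: x_def field_simps)
  have spos: "0 < s" using d0pos C1 by (simp add: s_def)
  have sle: "s \<le> 1" using d0le C1 by (simp add: s_def field_simps)
  have xy: "x < y" using xpos spos by (simp add: y_def algebra_simps)
  have ypos: "0 < y" using xpos xy by simp
  have gx: "g * x = a" using g1 by (simp add: x_def)
  have gy: "g * y = a * (1 + s)" using gx by (simp add: y_def)
  have gyx: "g * (y - x) = a * s" using gx gy by (simp add: algebra_simps)
  have kN: "\<kappa> \<le> \<beta> * \<gamma>"
  proof -
    have "real \<kappa> \<le> b * g" using kap cg b1 C1 by (simp add: mult_left_mono)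
    then have "real \<kappa> \<le> real (\<beta> * \<gamma>)" by (simp add: b_def g_def)
    then show ?thesis by (simp only: of_nat_le_iff)
  qed
  have main: "((1 + x) ^ \<gamma> - 1 - g * x) ^ \<beta> - (x / y) ^ \<kappa> * ((1 + y) ^ \<gamma> - 1 - g * y) ^ \<beta>
         \<le> f \<beta> \<gamma> \<kappa> * ((1 + x) ^ \<gamma>) ^ \<beta>"
    using main_comb[OF kN xpos less_imp_le[OF xy]] by (simp add: g_def)
  define Ex where "Ex = (1 + x) ^ \<gamma>"
  define Ey where "Ey = (1 + y) ^ \<gamma>"
  define hx where "hx = (1 + g * x) / Ex"
  define hy where "hy = (1 + g * y) / Ey"
  have Expos: "0 < Ex" using xpos by (simp add: Ex_def)
  have Eypos: "0 < Ey" using ypos by (simp add: Ey_def)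
  have Exhx: "Ex * hx = 1 + g * x" using Expos by (simp add: hx_def)
  have Eyhy: "Ey * hy = 1 + g * y" using Eypos by (simp add: hy_def)
  have Gx: "(1 + x) ^ \<gamma> - 1 - g * x = Ex * (1 - hx)" unfolding right_diff_distrib Exhx by (simp add: Ex_def)
  have Gy: "(1 + y) ^ \<gamma> - 1 - g * y = Ey * (1 - hy)" unfolding right_diff_distrib Eyhy by (simp add: Ey_def)
  have hy1: "0 \<le> 1 - hy"
  proof -
    have "1 + g * y \<le> Ey" using Bernoulli_inequality[of y \<gamma>] ypos by (simp add: Ey_def g_def)
    then show ?thesis using Eypos by (simp add: hy_def)
  qed
  have red: "(1 - hx) ^ \<beta> - (x / y) ^ \<kappa> * (Ey / Ex) ^ \<beta> * (1 - hy) ^ \<beta> \<le> f \<beta> \<gamma> \<kappa>"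
  proof -
    have "Ex ^ \<beta> * ((1 - hx) ^ \<beta> - (x / y) ^ \<kappa> * (Ey / Ex) ^ \<beta> * (1 - hy) ^ \<beta>)
        = (Ex * (1 - hx)) ^ \<beta> - (x / y) ^ \<kappa> * (Ey * (1 - hy)) ^ \<beta>"
    proof -
      have r1: "Ex ^ \<beta> * (Ey / Ex) ^ \<beta> = Ey ^ \<beta>" using Expos by (simp add: power_mult_distrib[symmetric])
      have "Ex ^ \<beta> * ((1 - hx) ^ \<beta> - (x / y) ^ \<kappa> * (Ey / Ex) ^ \<beta> * (1 - hy) ^ \<beta>)
          = Ex ^ \<beta> * (1 - hx) ^ \<beta> - (x / y) ^ \<kappa> * (Ex ^ \<beta> * (Ey / Ex) ^ \<beta>) * (1 - hy) ^ \<beta>"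
        by (simp add: algebra_simps)
      also have "\<dots> = (Ex * (1 - hx)) ^ \<beta> - (x / y) ^ \<kappa> * (Ey * (1 - hy)) ^ \<beta>"
        unfolding r1 by (simp add: power_mult_distrib mult.assoc)
      finally show ?thesis .
    qed
    also have "\<dots> \<le> f \<beta> \<gamma> \<kappa> * Ex ^ \<beta>" using main unfolding Gx Gy by (simp add: Ex_def)
    finally have "Ex ^ \<beta> * ((1 - hx) ^ \<beta> - (x / y) ^ \<kappa> * (Ey / Ex) ^ \<beta> * (1 - hy) ^ \<beta>) \<le> Ex ^ \<beta> * f \<beta> \<gamma> \<kappa>"
      by (simp add: mult.commute)
    then show ?thesis using Expos by (simp add: mult_le_cancel_left_pos)
  qed
  define \<theta> where "\<theta> = d1 + d0 + c^2 / g"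
  have \<theta>0: "0 \<le> \<theta>" using d1pos d0pos g1 by (simp add: \<theta>_def)
  have \<theta>le: "\<theta> \<le> 1/2" using d1le d0le D2 by (simp add: \<theta>_def g_def)
  have Exlow: "exp (c - \<theta>) \<le> Ex"
  proof -
    have "exp (g * (x - x^2)) \<le> Ex" using pow_lower[of x \<gamma>] xpos xle by (simp add: Ex_def g_def)
    moreover have "c - \<theta> \<le> g * (x - x^2)"
    proof -
      have "g * (x - x^2) = a - a^2 / g" using g1 by (simp add: x_def power2_eq_square field_simps)
      moreover have "a^2 / g \<le> c^2 / g" using apos a_le g1 by (intro divide_right_mono power_mono) auto
      ultimately show ?thesis by (simp add: \<theta>_def a_def)
    qed
    ultimately show ?thesis by (meson exp_le_cancel_iff order_trans)
  qed
  have expth: "exp \<theta> \<le> 1 + 2 * \<theta>"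
  proof -
    have "exp \<theta> \<le> 1 + \<theta> + \<theta>^2" using exp_bound[of \<theta>] \<theta>0 \<theta>le by simp
    moreover have "\<theta>^2 \<le> \<theta>" using \<theta>0 \<theta>le by (simp add: power2_eq_square mult_left_le_one_le)
    ultimately show ?thesis by simp
  qed
  have invEx: "1 / Ex \<le> exp \<theta> * E1"
  proof -
    have "1 / Ex \<le> 1 / exp (c - \<theta>)" using Exlow Expos by (intro divide_left_mono) auto
    also have "\<dots> = exp \<theta> * E1" by (simp add: E1_def exp_diff exp_minus field_simps)
    finally show ?thesis .
  qed
  have invEx2: "1 / Ex \<le> 2 * E1"
  proof -
    have "exp \<theta> * E1 \<le> 2 * E1" using expth \<theta>le E1pos by (intro mult_right_mono) auto
    then show ?thesis using invEx by simp
  qed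
  define u where "u = (1 + c) * E1"
  have u0: "0 \<le> u" using C1 E1pos by (simp add: u_def)
  have u6: "u \<le> 1/6"
  proof -
    have "6 * (1 + c) * E1 \<le> exp c * E1" using C3 E1pos by (intro mult_right_mono) auto
    then show ?thesis using eec by (simp add: u_def E1_def algebra_simps)
  qed
  have hx_le: "hx \<le> u * (1 + 2 * \<theta>)"
  proof -
    have "hx = (1 + a) * (1 / Ex)" by (simp add: hx_def gx)
    also have "\<dots> \<le> (1 + c) * (exp \<theta> * E1)" using a_le apos invEx Expos by (intro mult_mono) auto
    also have "\<dots> = u * exp \<theta>" by (simp add: u_def)
    also have "\<dots> \<le> u * (1 + 2 * \<theta>)" using u0 expth by (intro mult_left_mono) auto
    finally show ?thesis .
  qed
  have hx0: "0 \<le> hx" using apos Expos by (simp add: hx_def gx)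
  have hx3: "hx \<le> 1/3"
  proof -
    have "u * (1 + 2 * \<theta>) \<le> (1/6) * 2" using u0 u6 \<theta>0 \<theta>le by (intro mult_mono) auto
    then show ?thesis using hx_le by simp
  qed
  have Delta: "hx - hy \<le> s * d1 / 3"
  proof -
    have "hx - hy \<le> (y - x) * g^2 * y / Ex"
      using h_diff[OF \<gamma>1 xpos xy] by (simp add: hx_def hy_def Ex_def Ey_def g_def)
    also have "\<dots> = (a * s) * (a * (1 + s)) * (1 / Ex)"
    proof -
      have "(y - x) * g^2 * y = (g * (y - x)) * (g * y)" by (simp add: power2_eq_square algebra_simps)
      then show ?thesis unfolding gyx gy by simp
    qed
    also have "\<dots> \<le> (c * s) * (c * 2) * (2 * E1)"
      using apos a_le spos sle Expos invEx2 C1 by (intro mult_mono) auto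
    also have "\<dots> = s * d1 / 3" by (simp add: d1_def power2_eq_square)
    finally show ?thesis .
  qed
  have hy_le: "(1 - hy) ^ \<beta> \<le> (1 - hx) ^ \<beta> * exp (b * (s * d1))"
  proof -
    have sd: "0 \<le> s * d1" using spos d1pos by simp
    have "1 - hy \<le> (1 - hx) * (1 + s * d1)"
    proof -
      have "(1/3) * (s * d1) \<le> (1 - hx) * (s * d1)" using hx3 sd by (intro mult_right_mono) auto
      then have "s * d1 / 3 \<le> (1 - hx) * (s * d1)" by simp
      then show ?thesis using Delta by (simp add: algebra_simps)
    qed
    also have "\<dots> \<le> (1 - hx) * exp (s * d1)" using hx3 by (intro mult_left_mono) auto
    finally have "1 - hy \<le> (1 - hx) * exp (s * d1)" .
    then have "(1 - hy) ^ \<beta> \<le> ((1 - hx) * exp (s * d1)) ^ \<beta>" using hy1 by (intro power_mono) auto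
    also have "\<dots> = (1 - hx) ^ \<beta> * exp (b * (s * d1))" by (simp add: power_mult_distrib b_def exp_of_nat_mult)
    finally show ?thesis .
  qed
  have xy_le: "(x / y) ^ \<kappa> \<le> exp (- (b * c) * (s - s^2))"
  proof -
    have pl: "exp (real \<kappa> * (s - s^2)) \<le> (1 + s) ^ \<kappa>" using pow_lower[of s \<kappa>] spos sle by simp
    have xyeq: "(x / y) ^ \<kappa> = 1 / (1 + s) ^ \<kappa>" using xpos spos by (simp add: y_def power_divide)
    have pp: "0 < (1 + s) ^ \<kappa> * exp (real \<kappa> * (s - s^2))" using spos by simp
    have "(x / y) ^ \<kappa> \<le> 1 / exp (real \<kappa> * (s - s^2))"
      unfolding xyeq by (rule divide_left_mono[OF pl _ pp]) simp
    moreover have "1 / exp (real \<kappa> * (s - s^2)) = exp (- (b * c) * (s - s^2))"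
      using kap by (simp add: exp_minus inverse_eq_divide)
    ultimately show ?thesis by simp
  qed
  have EyEx: "(Ey / Ex) ^ \<beta> \<le> exp (b * (a * s))"
  proof -
    have "1 + y \<le> (1 + x) * exp (y - x)"
    proof -
      have "(1 + x) * (1 + (y - x)) \<le> (1 + x) * exp (y - x)" using xpos by (intro mult_left_mono) auto
      moreover have "1 + y \<le> (1 + x) * (1 + (y - x))" using xpos xy by (simp add: algebra_simps)
      ultimately show ?thesis by simp
    qed
    then have r: "(1 + y) / (1 + x) \<le> exp (y - x)" using xpos by (simp add: field_simps)
    have "Ey / Ex = ((1 + y) / (1 + x)) ^ \<gamma>" by (simp add: Ey_def Ex_def power_divide)
    also have "\<dots> \<le> exp (y - x) ^ \<gamma>" using r xpos ypos by (intro power_mono) auto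
    also have "\<dots> = exp (a * s)" using gyx by (simp add: exp_of_nat_mult[symmetric] g_def)
    finally have "Ey / Ex \<le> exp (a * s)" .
    then have "(Ey / Ex) ^ \<beta> \<le> exp (a * s) ^ \<beta>" using Expos Eypos by (intro power_mono) auto
    also have "\<dots> = exp (b * (a * s))" by (simp add: exp_of_nat_mult[symmetric] b_def)
    finally show ?thesis .
  qed
  have Eexp: "- (b * c) * (s - s^2) + b * (a * s) + b * (s * d1) = - K"
  proof -
    have "- (b * c) * (s - s^2) + b * (a * s) + b * (s * d1) = b * s * (c * s - d0)"
      by (simp add: a_def power2_eq_square algebra_simps)
    also have "c * s = d0 / 2" using C1 by (simp add: s_def)
    also have "b * s * (d0 / 2 - d0) = - b * d0^2 / (4 * c)" using C1 by (simp add: s_def power2_eq_square field_simps)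
    also have "\<dots> = - K" using d0sq b1 C1 by (simp add: field_simps)
    finally show ?thesis .
  qed
  have expK: "exp (- K) = \<epsilon> / 2" using \<epsilon>0 by (simp add: Kdef exp_minus)
  have T: "(x / y) ^ \<kappa> * (Ey / Ex) ^ \<beta> * (1 - hy) ^ \<beta> \<le> (1 - hx) ^ \<beta> * (\<epsilon> / 2)"
  proof -
    have p1: "0 \<le> (x / y) ^ \<kappa>" using xpos ypos by simp
    have p2: "0 \<le> (Ey / Ex) ^ \<beta>" using Expos Eypos by simp
    have p3: "0 \<le> (1 - hy) ^ \<beta>" using hy1 by simp
    have "(x / y) ^ \<kappa> * (Ey / Ex) ^ \<beta> * (1 - hy) ^ \<beta>
        \<le> exp (- (b * c) * (s - s^2)) * exp (b * (a * s)) * ((1 - hx) ^ \<beta> * exp (b * (s * d1)))"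
      using xy_le EyEx hy_le p1 p2 p3 by (intro mult_mono) auto
    also have "\<dots> = (1 - hx) ^ \<beta> * exp (- (b * c) * (s - s^2) + b * (a * s) + b * (s * d1))"
      by (simp only: exp_add) (simp add: mult_ac)
    also have "\<dots> = (1 - hx) ^ \<beta> * (\<epsilon> / 2)" using Eexp expK by simp
    finally show ?thesis .
  qed
  have step3: "(1 - \<epsilon> / 2) * (1 - hx) ^ \<beta> \<le> f \<beta> \<gamma> \<kappa>"
    using red T by (simp add: algebra_simps)
  define v where "v = c^4 * E1^2"
  define w where "w = 2 * u * \<theta>"
  have v0: "0 \<le> v" by (simp add: v_def)
  have w0: "0 \<le> w" using u0 \<theta>0 by (simp add: w_def)
  have v4: "v \<le> 1/4"
  proof -
    have "4 * c^4 * E1^2 \<le> exp (2 * c) * E1^2" using C4 by (intro mult_right_mono) auto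
    moreover have "exp (2 * c) * E1^2 = 1" by (simp add: E1_def power2_eq_square exp_add[symmetric])
    ultimately show ?thesis by (simp add: v_def)
  qed
  have w2: "w \<le> 1/2" using u0 u6 \<theta>0 \<theta>le
  proof -
    have "u * \<theta> \<le> (1/6) * (1/2)" using u0 u6 \<theta>0 \<theta>le by (intro mult_mono) auto
    then show ?thesis by (simp add: w_def)
  qed
  have hxuw: "hx \<le> u + w" using hx_le by (simp add: w_def algebra_simps)
  have base: "1/2 \<le> 1 - u - v" using u6 v4 by simp
  have Bnd: "b * (w - v) \<le> \<epsilon> / 4"
  proof -
    have T1: "2 * b * u * d1 \<le> b * v / 3"
    proof -
      have "72 * (1 + c) * c^2 \<le> c^2 * c^2" using C5 by (intro mult_right_mono) auto
      moreover have "c^2 * c^2 = c^4" by (simp add: power_add[symmetric])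
      ultimately have "72 * ((1 + c) * c^2) \<le> c^4" by (metis mult.assoc)
      then have "24 * ((1 + c) * c^2) \<le> c^4 / 3" by linarith
      then have "24 * (1 + c) * c^2 \<le> c^4 / 3" by (metis mult.assoc)
      then have "24 * (1 + c) * c^2 * (b * E1^2) \<le> c^4 / 3 * (b * E1^2)" using b1 by (intro mult_right_mono) auto
      then show ?thesis by (simp add: u_def d1_def v_def power2_eq_square algebra_simps)
    qed
    have "2 * b * u * (c^2 / g) = 2 * real \<beta> * (1 + c) * c^2 * exp (- c) / real \<gamma>"
      by (simp add: u_def E1_def b_def g_def mult_ac)
    then have T2: "2 * b * u * (c^2 / g) \<le> \<epsilon> / 8" using D3 by simp
    define X where "X = 2 * b * u * d0"
    have X0: "0 \<le> X" using b1 u0 d0pos by (simp add: X_def)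
    have Xsq: "X^2 = 16 * b * u^2 * c * K" using d0sq b1 by (simp add: X_def power2_eq_square field_simps)
    have T3: "X \<le> \<epsilon> / 8 + 2 * b * v / 3"
    proof (cases "X \<le> \<epsilon> / 8")
      case True
      have "0 \<le> b * v" using b1 v0 by simp
      then show ?thesis using True by linarith
    next
      case False
      then have "X \<le> X * (8 * X / \<epsilon>)" using X0 \<epsilon>0 by (simp add: field_simps)
      also have "\<dots> = 128 * b * u^2 * c * K / \<epsilon>" using Xsq by (simp add: power2_eq_square field_simps)
      also have "\<dots> \<le> 2 * b * v / 3"
      proof -
        have "192 * (1 + c)^2 * K * c \<le> \<epsilon> * c^3 * c" using C6 C1 by (intro mult_right_mono) auto
        then have "128 * (1 + c)^2 * c * K \<le> \<epsilon> * (2 * c^4 / 3)" by (simp add: power2_eq_square power3_eq_cube power4_eq_xxxx algebra_simps)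
        then have "128 * (1 + c)^2 * c * K / \<epsilon> \<le> 2 * c^4 / 3" using \<epsilon>0 by (simp add: field_simps)
        then have "128 * (1 + c)^2 * c * K / \<epsilon> * (b * E1^2) \<le> 2 * c^4 / 3 * (b * E1^2)" using b1 by (intro mult_right_mono) auto
        then show ?thesis by (simp add: u_def v_def power2_eq_square algebra_simps)
      qed
      finally have "X \<le> 2 * b * v / 3" .
      moreover have "0 \<le> \<epsilon>" using \<epsilon>0 by simp
      ultimately show ?thesis by linarith
    qed
    have "b * w = 2 * b * u * d1 + X + 2 * b * u * (c^2 / g)" by (simp add: w_def \<theta>_def X_def algebra_simps)
    then show ?thesis using T1 T2 T3 by (simp add: algebra_simps)
  qed
  have cmp: "(1 - \<epsilon> / 2) * (1 - u - v) ^ \<beta> \<le> (1 - u - w) ^ \<beta>"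
    using pow_compare[OF u0 v0 w0 base w2 \<epsilon>0] Bnd by (simp add: b_def)
  have uw_hx: "(1 - u - w) ^ \<beta> \<le> (1 - hx) ^ \<beta>"
  proof (rule power_mono)
    show "1 - u - w \<le> 1 - hx" using hxuw by simp
    show "0 \<le> 1 - u - w" using u6 w2 by simp
  qed
  have b0: "0 \<le> (1 - u - v) ^ \<beta>" using base by simp
  have e2: "0 \<le> 1 - \<epsilon> / 2" using \<epsilon>1 by simp
  have "(1 - \<epsilon>) * (1 - u - v) ^ \<beta> \<le> (1 - \<epsilon> / 2) * ((1 - \<epsilon> / 2) * (1 - u - v) ^ \<beta>)"
  proof -
    have "1 - \<epsilon> \<le> (1 - \<epsilon> / 2) * (1 - \<epsilon> / 2)" by (simp add: algebra_simps power2_eq_square)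
    then show ?thesis using b0 by (simp add: mult.assoc[symmetric] mult_right_mono)
  qed
  also have "\<dots> \<le> (1 - \<epsilon> / 2) * (1 - hx) ^ \<beta>" using cmp uw_hx e2 by (intro mult_left_mono) auto
  also have "\<dots> \<le> f \<beta> \<gamma> \<kappa>" by (rule step3)
  finally have F: "(1 - \<epsilon>) * (1 - u - v) ^ \<beta> \<le> f \<beta> \<gamma> \<kappa>" .
  have "(c + 1) * exp (- c) = u" by (simp add: u_def E1_def)
  moreover have "c^4 * exp (- 2 * c) = v" by (simp only: e2c v_def)
  ultimately show ?thesis using F by simp
qed


lemma exp_cube:
  fixes c :: real assumes "0 \<le> c" shows "c^3 / 27 \<le> exp c"
proof -
  have "c/3 \<le> exp (c/3)" using exp_ge_add_one_self[of "c/3"] by linarith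
  then have "(c/3)^3 \<le> exp (c/3)^3" using assms by (intro power_mono) auto
  also have "exp (c/3)^3 = exp c" by (simp add: exp_of_nat_mult[symmetric])
  finally show ?thesis by (simp add: power_divide)
qed

lemma c_conds:
  fixes c K \<epsilon> :: real
  assumes c: "2600 \<le> c" and cK: "768 * K \<le> \<epsilon> * c" and K: "0 \<le> K" and \<epsilon>: "0 < \<epsilon>"
  shows "1 \<le> c" "96 * c^2 \<le> exp c" "6 * (1 + c) \<le> exp c" "4 * c^4 \<le> exp (2 * c)"
        "72 * (1 + c) \<le> c^2" "192 * (1 + c)^2 * K \<le> \<epsilon> * c^3"
proof -
  have e: "c^3 / 27 \<le> exp c" by (rule exp_cube) (use c in auto)
  have c3: "c * c^2 = c^3" by (simp add: power2_eq_square power3_eq_cube)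
  have cc: "c \<le> c^2" using c by (simp add: power2_eq_square)
  show "1 \<le> c" using c by simp
  have "2592 * c^2 \<le> c * c^2" using c by (intro mult_right_mono) auto
  then show C2: "96 * c^2 \<le> exp c" using e c3 by linarith
  show "6 * (1 + c) \<le> exp c" using C2 cc c by (smt (verit))
  have "(96 * c^2) * (96 * c^2) \<le> exp c * exp c" using C2 by (intro mult_mono) auto
  moreover have "exp (2 * c) = exp c * exp c" by (simp add: exp_add[symmetric])
  moreover have "4 * c^4 \<le> (96 * c^2) * (96 * c^2)"
  proof -
    have "c^4 = c^2 * c^2" by (simp add: power_add[symmetric])
    moreover have "0 \<le> c^2 * c^2" by simp
    moreover have "(96 * c^2) * (96 * c^2) = 9216 * (c^2 * c^2)" by simp
    ultimately show ?thesis by linarith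
  qed
  ultimately show "4 * c^4 \<le> exp (2 * c)" by linarith
  have h144: "144 * c \<le> c * c" using c by (intro mult_right_mono) auto
  have "c^2 = c * c" by (simp add: power2_eq_square)
  then show "72 * (1 + c) \<le> c^2" using c h144 by (smt (verit))
  have "(1 + c)^2 \<le> (2 * c)^2" using c by (intro power_mono) auto
  then have "192 * (1 + c)^2 * K \<le> 192 * (2 * c)^2 * K" using K by (intro mult_right_mono) auto
  also have "\<dots> = (768 * K) * c^2" by (simp add: power2_eq_square)
  also have "\<dots> \<le> (\<epsilon> * c) * c^2" using cK by (intro mult_right_mono) auto
  also have "\<dots> = \<epsilon> * c^3" by (simp add: power2_eq_square power3_eq_cube)
  finally show "192 * (1 + c)^2 * K \<le> \<epsilon> * c^3" .
qed

lemma ln_le_powr: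
  fixes x \<eta> :: real assumes "0 < x" "0 < \<eta>" shows "ln x \<le> x powr \<eta> / \<eta>"
proof -
  have "ln (x powr \<eta>) \<le> x powr \<eta>" by (rule ln_bound) (use assms in simp)
  then have "\<eta> * ln x \<le> x powr \<eta>" using assms by simp
  then show ?thesis using assms by (simp add: field_simps)
qed

lemma D1_lem:
  fixes b K \<delta> c :: real
  assumes bN: "(512 * K / \<delta>)^2 \<le> b" and \<delta>: "0 < \<delta>" and K: "0 < K" and b: "0 < b"
    and c0: "0 \<le> c" and cb: "c \<le> (1/\<delta>) * ln b"
  shows "4 * c * K / b \<le> 1/64"
proof -
  have "ln b \<le> b powr (1/2) / (1/2)" by (rule ln_le_powr) (use b in auto)
  then have lb: "ln b \<le> 2 * sqrt b" using b by (simp add: powr_half_sqrt)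
  have "c \<le> (1/\<delta>) * (2 * sqrt b)" using cb lb \<delta> by (smt (verit) divide_pos_pos mult_left_mono)
  then have "4 * c * K \<le> 4 * ((1/\<delta>) * (2 * sqrt b)) * K" using K by (intro mult_right_mono) auto
  also have "\<dots> = (8 * K / \<delta>) * sqrt b" by (simp add: field_simps)
  finally have A: "4 * c * K \<le> (8 * K / \<delta>) * sqrt b" .
  have sb: "512 * K / \<delta> \<le> sqrt b" by (rule real_le_rsqrt) (use bN in simp)
  have "b = sqrt b * sqrt b" using assms(4) by simp
  also have "\<dots> \<ge> (512 * K / \<delta>) * sqrt b" using sb assms(4) by (intro mult_right_mono) auto
  finally have "64 * ((8 * K / \<delta>) * sqrt b) \<le> b" by (simp add: field_simps)
  then have "64 * (4 * c * K) \<le> b" using A by linarith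
  then show ?thesis using b by (simp add: field_simps)
qed

lemma D2_lem:
  fixes g \<delta> c :: real
  assumes gN: "(256 / \<delta>^2)^2 \<le> g" and \<delta>: "0 < \<delta>" and g: "1 \<le> g"
    and c0: "0 \<le> c" and cg: "c \<le> (2/\<delta>) * ln g"
  shows "c^2 / g \<le> 1/4"
proof -
  define q where "q = g powr (1/4)"
  have "ln g \<le> g powr (1/4) / (1/4)" by (rule ln_le_powr) (use g in auto)
  then have lg: "ln g \<le> 4 * q" by (simp add: q_def)
  have "c \<le> (2/\<delta>) * (4 * q)" using cg lg \<delta> by (smt (verit) divide_pos_pos mult_left_mono)
  then have cq: "c \<le> (8/\<delta>) * q" by simp
  have "c^2 \<le> ((8/\<delta>) * q)^2" using cq c0 by (intro power_mono) auto
  also have "\<dots> = (64 / \<delta>^2) * (q * q)" by (simp add: power2_eq_square field_simps)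
  also have "q * q = sqrt g" using g by (simp add: q_def powr_add[symmetric] powr_half_sqrt)
  finally have A: "c^2 \<le> (64 / \<delta>^2) * sqrt g" .
  have sg: "256 / \<delta>^2 \<le> sqrt g" by (rule real_le_rsqrt) (use gN in simp)
  have "g = sqrt g * sqrt g" using assms(3) by simp
  also have "\<dots> \<ge> (256 / \<delta>^2) * sqrt g" using sg assms(3) by (intro mult_right_mono) auto
  finally have "4 * ((64 / \<delta>^2) * sqrt g) \<le> g" by (simp add: field_simps)
  then have "4 * c^2 \<le> g" using A by linarith
  then show ?thesis using g by (simp add: field_simps)
qed

lemma D3_lem:
  fixes b g \<delta> e c :: real
  assumes \<delta>: "0 < \<delta>" and e: "0 < e" and g1: "1 \<le> g" and b0: "0 < b" and c1: "1 \<le> c"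
    and cg: "c \<le> (2/\<delta>) * ln g" and bc: "ln b \<le> 2 * c" and bg: "b \<le> g powr (2 - \<delta>)"
    and gM: "(32 * (24/\<delta>^2)^3 / e) powr (4/\<delta>) \<le> g"
  shows "2 * b * (1 + c) * c^2 * exp (- c) / g \<le> e / 8"
proof -
  define A where "A = 24/\<delta>^2"
  define M where "M = 32 * A^3 / e"
  have A0: "0 < A" using \<delta> by (simp add: A_def)
  have M0: "0 < M" using A0 e by (simp add: M_def)
  have gpos: "0 < g" using g1 by simp
  have sbe: "sqrt b \<le> exp c"
  proof -
    have "ln (sqrt b) = ln b / 2" using b0 by (simp add: ln_sqrt)
    then have "ln (sqrt b) \<le> c" using bc by simp
    then have "exp (ln (sqrt b)) \<le> exp c" by simp
    then show ?thesis using b0 by simp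
  qed
  have be: "b * exp (- c) \<le> sqrt b"
  proof -
    have "b * exp (- c) = b / exp c" by (simp add: exp_minus field_simps)
    also have "\<dots> \<le> b / sqrt b" using sbe b0 by (intro divide_left_mono) auto
    also have "\<dots> = sqrt b" using b0 by (simp add: real_div_sqrt)
    finally show ?thesis .
  qed
  have sbg: "sqrt b \<le> g powr (1 - \<delta>/2)"
  proof -
    have "sqrt b \<le> sqrt (g powr (2 - \<delta>))" using bg by simp
    also have "sqrt (g powr (2 - \<delta>)) = g powr ((2 - \<delta>) / 2)" using gpos by (simp add: powr_half_sqrt_powr)
    also have "(2 - \<delta>) / 2 = 1 - \<delta>/2" by simp
    finally show ?thesis .
  qed
  define q where "q = g powr (\<delta>/12)"
  have q0: "0 \<le> q" by (simp add: q_def)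
  have lg: "ln g \<le> q / (\<delta>/12)" unfolding q_def by (rule ln_le_powr) (use gpos \<delta> in auto)
  have cA: "c \<le> A * q"
  proof -
    have "c \<le> (2/\<delta>) * (q / (\<delta>/12))" using cg lg \<delta> by (smt (verit) divide_pos_pos mult_left_mono)
    also have "\<dots> = A * q" by (simp add: A_def power2_eq_square field_simps)
    finally show ?thesis .
  qed
  have q3: "q^3 = g powr (\<delta>/4)"
  proof -
    have "q^3 = q * q * q" by (simp add: power3_eq_cube)
    also have "\<dots> = g powr (\<delta>/12 + \<delta>/12 + \<delta>/12)" by (simp only: q_def powr_add)
    also have "\<delta>/12 + \<delta>/12 + \<delta>/12 = \<delta>/4" by simp
    finally show ?thesis .
  qed
  have c3: "c^3 \<le> A^3 * g powr (\<delta>/4)"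
  proof -
    have "c^3 \<le> (A * q)^3" using cA c1 by (intro power_mono) auto
    also have "\<dots> = A^3 * g powr (\<delta>/4)" by (simp add: power_mult_distrib q3)
    finally show ?thesis .
  qed
  have gM': "M \<le> g powr (\<delta>/4)"
  proof -
    have "(M powr (4/\<delta>)) powr (\<delta>/4) \<le> g powr (\<delta>/4)"
      using gM \<delta> by (intro powr_mono2) (auto simp: M_def A_def)
    moreover have "(M powr (4/\<delta>)) powr (\<delta>/4) = M" using M0 \<delta> by (simp add: powr_powr)
    ultimately show ?thesis by simp
  qed
  have key: "g powr (\<delta>/4) * g powr (1 - \<delta>/2) / g = 1 / g powr (\<delta>/4)"
  proof -
    have "g powr (\<delta>/4) * g powr (1 - \<delta>/2) * g powr (\<delta>/4) = g powr (\<delta>/4 + (1 - \<delta>/2) + \<delta>/4)"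
      by (simp only: powr_add)
    also have "\<delta>/4 + (1 - \<delta>/2) + \<delta>/4 = 1" by simp
    also have "g powr 1 = g" using gpos by simp
    finally have "g powr (\<delta>/4) * g powr (1 - \<delta>/2) * g powr (\<delta>/4) = g" .
    then show ?thesis using gpos by (simp add: field_simps)
  qed
  have "2 * b * (1 + c) * c^2 * exp (- c) / g = (2 * (1 + c) * c^2) * (b * exp (- c)) / g" by (simp add: mult_ac)
  also have "\<dots> \<le> (4 * c^3) * sqrt b / g"
  proof -
    have h: "2 * (1 + c) * c^2 \<le> 4 * c^3"
    proof -
      have "2 * (1 + c) * c^2 \<le> 2 * (2 * c) * c^2" using c1 by (intro mult_right_mono) auto
      then show ?thesis by (simp add: power2_eq_square power3_eq_cube)
    qed
    have p1: "0 \<le> 4 * c^3" using c1 by simp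
    have p2: "0 \<le> b * exp (- c)" using b0 by simp
    have "(2 * (1 + c) * c^2) * (b * exp (- c)) \<le> (4 * c^3) * sqrt b"
      by (rule mult_mono[OF h be p1 p2])
    then show ?thesis using gpos by (simp add: divide_right_mono)
  qed
  also have "\<dots> \<le> (4 * (A^3 * g powr (\<delta>/4))) * g powr (1 - \<delta>/2) / g"
    using c3 sbg gpos c1 A0 b0 by (intro divide_right_mono mult_mono) auto
  also have "\<dots> = 4 * A^3 * (g powr (\<delta>/4) * g powr (1 - \<delta>/2) / g)" by (simp add: mult_ac)
  also have "\<dots> = 4 * A^3 / g powr (\<delta>/4)" using key by simp
  also have "\<dots> \<le> 4 * A^3 / M" using gM' M0 A0 by (intro divide_left_mono) (auto intro: mult_pos_pos less_le_trans)
  also have "\<dots> = e / 8" using e A0 by (simp add: M_def field_simps)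
  finally show ?thesis .
qed

lemma final:
  fixes \<delta> \<epsilon> :: real
  assumes \<delta>: "0 < \<delta>" and \<epsilon>: "0 < \<epsilon>"
  shows "\<exists>N::nat. \<forall>\<beta> \<gamma> \<kappa> :: nat.
    \<beta> \<ge> N \<and> \<gamma> \<ge> N \<and> \<kappa> \<ge> N \<and>
    (1/2) * real \<beta> * ln (real \<beta>) < real \<kappa> \<and>
    real \<kappa> < (1/\<delta>) * real \<beta> * ln (real \<beta>) \<and>
    \<gamma> < \<beta> \<and> real \<beta> < real \<gamma> powr (2 - \<delta>) \<longrightarrow>
    (let c = real \<kappa> / real \<beta> in
      f \<beta> \<gamma> \<kappa> \<ge> (1 - \<epsilon>) * (1 - (c + 1) * exp (- c) - c powr 4 * exp (- 2 * c)) ^ \<beta>)"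
proof -
  define e where "e = min \<epsilon> (1/2)"
  have e0: "0 < e" and e1: "e < 1" and e\<epsilon>: "e \<le> \<epsilon>" using \<epsilon> by (auto simp: e_def)
  define K where "K = ln (2 / e)"
  have K0: "0 < K" using e0 e1 by (simp add: K_def)
  define c0 where "c0 = max 2600 (768 * K / e)"
  define M where "M = 32 * (24/\<delta>^2)^3 / e"
  define Nr where "Nr = max (max (exp (2 * c0)) ((512 * K / \<delta>)^2)) (max ((256 / \<delta>^2)^2) (M powr (4/\<delta>)))"
  define N where "N = nat \<lceil>Nr\<rceil>"
  show ?thesis
  proof (rule exI[of _ N], intro allI impI)
    fix \<beta> \<gamma> \<kappa> :: nat
    assume H: "\<beta> \<ge> N \<and> \<gamma> \<ge> N \<and> \<kappa> \<ge> N \<and>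
      (1/2) * real \<beta> * ln (real \<beta>) < real \<kappa> \<and>
      real \<kappa> < (1/\<delta>) * real \<beta> * ln (real \<beta>) \<and>
      \<gamma> < \<beta> \<and> real \<beta> < real \<gamma> powr (2 - \<delta>)"
    define b where "b = real \<beta>"
    define g where "g = real \<gamma>"
    define c where "c = real \<kappa> / real \<beta>"
    have gNr: "Nr \<le> g"
    proof -
      have "Nr \<le> real N" unfolding N_def by (rule real_nat_ceiling_ge)
      also have "\<dots> \<le> g" using H by (simp add: g_def)
      finally show ?thesis .
    qed
    have e2c0: "exp (2 * c0) \<le> g" using gNr by (simp add: Nr_def)
    have g1: "1 \<le> g"
    proof -
      have "1 \<le> exp (2 * c0)" using K0 e0 by (simp add: c0_def)
      then show ?thesis using e2c0 by linarith
    qed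
    have gb: "g < b" using H by (simp add: g_def b_def)
    have b0: "0 < b" using gb g1 by simp
    have \<beta>1: "1 \<le> \<beta>" using b0 by (simp add: b_def)
    have \<gamma>1: "1 \<le> \<gamma>" using g1 by (simp add: g_def)
    have kap: "real \<kappa> = b * c" using b0 by (simp add: c_def b_def)
    have lo: "ln b / 2 < c"
    proof -
      have "b * (ln b / 2) < b * c" using H kap by (simp add: b_def)
      then show ?thesis using b0 by simp
    qed
    have hi: "c < (1/\<delta>) * ln b"
    proof -
      have "b * c < b * ((1/\<delta>) * ln b)" using H kap by (simp add: b_def mult_ac)
      then show ?thesis using b0 by (metis mult_less_cancel_left_pos)
    qed
    have lng0: "0 \<le> ln g" using g1 by simp
    have lnb2: "ln b \<le> 2 * ln g"
    proof -
      have bl: "b < g powr (2 - \<delta>)" using H by (simp add: b_def g_def)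
      have "ln b < ln (g powr (2 - \<delta>))" using bl b0 by (intro ln_less_cancel_iff[THEN iffD2]) auto
      also have "\<dots> = (2 - \<delta>) * ln g" by simp
      also have "\<dots> \<le> 2 * ln g" using \<delta> lng0 by (simp add: algebra_simps)
      finally show ?thesis by simp
    qed
    have lnbc0: "2 * c0 \<le> ln b"
    proof -
      have "ln (exp (2 * c0)) \<le> ln g" using e2c0 g1 by (subst ln_le_cancel_iff) auto
      also have "\<dots> \<le> ln b" using gb g1 by simp
      finally show ?thesis by simp
    qed
    have cc0: "c0 \<le> c" using lnbc0 lo by simp
    have c2600: "2600 \<le> c" using cc0 by (simp add: c0_def)
    have cK: "768 * K \<le> e * c"
    proof -
      have "768 * K / e \<le> c" using cc0 by (simp add: c0_def)
      then show ?thesis using e0 by (simp add: field_simps)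
    qed
    note CC = c_conds[OF c2600 cK less_imp_le[OF K0] e0]
    have c0': "0 \<le> c" using c2600 by simp
    have D1: "4 * c * K / real \<beta> \<le> 1/64"
      using D1_lem[of K \<delta> b c] gNr gb \<delta> K0 b0 c0' hi by (simp add: Nr_def b_def)
    have cg: "c \<le> (2/\<delta>) * ln g"
    proof -
      have "(1/\<delta>) * ln b \<le> (1/\<delta>) * (2 * ln g)" using lnb2 \<delta> by (intro mult_left_mono) auto
      then show ?thesis using hi by simp
    qed
    have D2: "c^2 / real \<gamma> \<le> 1/4"
      using D2_lem[of \<delta> g c] gNr \<delta> g1 c0' cg by (simp add: Nr_def g_def)
    have D3: "2 * real \<beta> * (1 + c) * c^2 * exp (- c) / real \<gamma> \<le> e / 8"
    proof -
      have bg: "b \<le> g powr (2 - \<delta>)" using H by (simp add: b_def g_def)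
      have gM: "(32 * (24/\<delta>^2)^3 / e) powr (4/\<delta>) \<le> g" using gNr by (simp add: Nr_def M_def)
      show ?thesis using D3_lem[OF \<delta> e0 g1 b0 CC(1) cg _ bg gM] lo by (simp add: b_def g_def)
    qed
    have core': "(1 - e) * (1 - (c + 1) * exp (- c) - c^4 * exp (- 2 * c)) ^ \<beta> \<le> f \<beta> \<gamma> \<kappa>"
      by (rule core[OF \<gamma>1 \<beta>1 c_def e0 e1 K_def CC D1 D2 D3])
    have p0: "0 \<le> 1 - (c + 1) * exp (- c) - c^4 * exp (- 2 * c)"
    proof -
      have E: "exp c * exp (- c) = 1" by (simp add: exp_minus)
      have "6 * (1 + c) * exp (- c) \<le> exp c * exp (- c)" using CC(3) by (intro mult_right_mono) auto
      then have u: "(c + 1) * exp (- c) \<le> 1/6" using E by (simp add: algebra_simps)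
      have E2: "exp (2 * c) * exp (- 2 * c) = 1" by (simp add: exp_add[symmetric])
      have m: "4 * c^4 * exp (- 2 * c) \<le> exp (2 * c) * exp (- 2 * c)" using CC(4) by (intro mult_right_mono) auto
      have v: "c^4 * exp (- 2 * c) \<le> 1/4" using m E2 by linarith
      show ?thesis using u v by simp
    qed
    have "(1 - \<epsilon>) * (1 - (c + 1) * exp (- c) - c^4 * exp (- 2 * c)) ^ \<beta>
        \<le> (1 - e) * (1 - (c + 1) * exp (- c) - c^4 * exp (- 2 * c)) ^ \<beta>"
      using e\<epsilon> p0 by (intro mult_right_mono) auto
    also note core'
    finally have fin: "(1 - \<epsilon>) * (1 - (c + 1) * exp (- c) - c^4 * exp (- 2 * c)) ^ \<beta> \<le> f \<beta> \<gamma> \<kappa>" .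
    have "c powr 4 = c^4" using c0' by simp
    then show "let c = real \<kappa> / real \<beta> in
      f \<beta> \<gamma> \<kappa> \<ge> (1 - \<epsilon>) * (1 - (c + 1) * exp (- c) - c powr 4 * exp (- 2 * c)) ^ \<beta>"
      using fin by (simp add: Let_def c_def)
  qed
qed


theorem theorem5p1:
  shows "\<exists>C::real > 0. \<forall>\<delta>::real > 0. \<forall>\<epsilon>::real > 0. \<exists>N::nat. \<forall>\<beta> \<gamma> \<kappa> :: nat.
    \<beta> \<ge> N \<and> \<gamma> \<ge> N \<and> \<kappa> \<ge> N \<and>
    (1/2) * real \<beta> * ln (real \<beta>) < real \<kappa> \<and>
    real \<kappa> < (1/\<delta>) * real \<beta> * ln (real \<beta>) \<and>
    \<gamma> < \<beta> \<and> real \<beta> < real \<gamma> powr (2 - \<delta>) \<longrightarrow>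
    (let c = real \<kappa> / real \<beta> in
      f \<beta> \<gamma> \<kappa> \<ge> (1 - \<epsilon>) * (1 - (c + 1) * exp (- c) - c powr C * exp (- 2 * c)) ^ \<beta>)"
proof (rule exI[of _ "4::real"], intro conjI allI impI)
  show "(4::real) > 0" by simp
next
  fix \<delta> \<epsilon> :: real
  assume "\<delta> > 0" "\<epsilon> > 0"
  then show "\<exists>N::nat. \<forall>\<beta> \<gamma> \<kappa> :: nat.
    \<beta> \<ge> N \<and> \<gamma> \<ge> N \<and> \<kappa> \<ge> N \<and>
    (1/2) * real \<beta> * ln (real \<beta>) < real \<kappa> \<and>
    real \<kappa> < (1/\<delta>) * real \<beta> * ln (real \<beta>) \<and>
    \<gamma> < \<beta> \<and> real \<beta> < real \<gamma> powr (2 - \<delta>) \<longrightarrow>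
    (let c = real \<kappa> / real \<beta> in
      f \<beta> \<gamma> \<kappa> \<ge> (1 - \<epsilon>) * (1 - (c + 1) * exp (- c) - c powr 4 * exp (- 2 * c)) ^ \<beta>)"
    by (rule final)
qed

end
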